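(* Let $G$ be a $(k+1)$-critical hypergraph with $k\ge3$. If there exist a vertex $v\in V(G)$ and an edge $e\in E(G)$ such that $v$ is a separating vertex of $G-e$ (regardless of whether $v\in e$), then $G$ is a Hajós join of two hypergraphs.
   Context: A hypergraph is a pair $G=(V,E)$ of finite sets with $E\subseteq 2^V$ and $|e|\ge2$ for all $e\in E$ (no multiple edges). A coloring requires every edge to contain two vertices of different colors; $\chi$ is the chromatic number. $G$ is $(k+1)$-critical if $\chi(G)=k+1$ but $\chi(H)\le k$ for every proper subhypergraph $H$. $G-e$ is obtained by deleting the edge $e$. A vertex $v$ is a separating vertex of a hypergraph $H$ if $H$ is the union of two induced subhypergraphs $H_1,H_2$ with $V(H_1)\cap V(H_2)=\{v\}$ and $|V(H_i)|\ge2$. Hajós join: for vertex-disjoint $G_1,G_2$, $e_i\in E(G_i)$, $v_i\in e_i$, delete $e_1,e_2$, identify $v_1,v_2$ into a new vertex $v^*$, and add a new edge $e^*$ equal to $(e_1\cup e_2)\setminus\{v_1,v_2\}$ or to $((e_1\cup e_2)\setminus\{v_1,v_2\})\cup\{v^*\}$. *)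

theory Defs
  imports Main
begin

definition hypergraph :: "'a set \<Rightarrow> 'a set set \<Rightarrow> bool" where
  "hypergraph V E \<longleftrightarrow> finite V \<and> E \<subseteq> Pow V \<and> (\<forall>e\<in>E. 2 \<le> card e)"

definition colorable :: "'a set \<Rightarrow> 'a set set \<Rightarrow> nat \<Rightarrow> bool" where
  "colorable V E k \<longleftrightarrow> (\<exists>f :: 'a \<Rightarrow> nat. f ` V \<subseteq> {..<k} \<and>
       (\<forall>e\<in>E. \<exists>x\<in>e. \<exists>y\<in>e. f x \<noteq> f y))"

definition chromatic_number :: "'a set \<Rightarrow> 'a set set \<Rightarrow> nat" where
  "chromatic_number V E = (LEAST k. colorable V E k)"

definition proper_subhypergraph :: "'a set \<Rightarrow> 'a set set \<Rightarrow> 'a set \<Rightarrow> 'a set set \<Rightarrow> bool" where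
  "proper_subhypergraph V' E' V E \<longleftrightarrow> hypergraph V' E' \<and> V' \<subseteq> V \<and> E' \<subseteq> E \<and> (V', E') \<noteq> (V, E)"

definition critical :: "nat \<Rightarrow> 'a set \<Rightarrow> 'a set set \<Rightarrow> bool" where
  "critical m V E \<longleftrightarrow> hypergraph V E \<and> chromatic_number V E = m \<and>
     (\<forall>V' E'. proper_subhypergraph V' E' V E \<longrightarrow> chromatic_number V' E' < m)"

definition induced_edges :: "'a set set \<Rightarrow> 'a set \<Rightarrow> 'a set set" where
  "induced_edges E W = {e \<in> E. e \<subseteq> W}"

definition separating_vertex :: "'a set \<Rightarrow> 'a set set \<Rightarrow> 'a \<Rightarrow> bool" where
  "separating_vertex V E v \<longleftrightarrow> (\<exists>V1 V2. V1 \<subseteq> V \<and> V2 \<subseteq> V \<and> V1 \<union> V2 = V \<and>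
      V1 \<inter> V2 = {v} \<and> 2 \<le> card V1 \<and> 2 \<le> card V2 \<and>
      E = induced_edges E V1 \<union> induced_edges E V2)"

text \<open>Hajos join of G1=(V1,E1) and G2=(V2,E2), represented with the identified vertex
  already shared: V1 \<inter> V2 = {w}, where w plays the role of v1 = v2 = v*.
  Then (e1 \<union> e2) - {v1,v2} becomes (e1 \<union> e2) - {w}.\<close>
definition hajos_join_of ::
  "'a set \<Rightarrow> 'a set set \<Rightarrow> 'a set \<Rightarrow> 'a set set \<Rightarrow> 'a set \<Rightarrow> 'a set set \<Rightarrow> bool" where
  "hajos_join_of V1 E1 V2 E2 V E \<longleftrightarrow> hypergraph V1 E1 \<and> hypergraph V2 E2 \<and>
     (\<exists>w e1 e2 estar. V1 \<inter> V2 = {w} \<and> e1 \<in> E1 \<and> e2 \<in> E2 \<and> w \<in> e1 \<and> w \<in> e2 \<and>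
        (estar = (e1 \<union> e2) - {w} \<or> estar = e1 \<union> e2) \<and>
        V = V1 \<union> V2 \<and> E = (E1 - {e1}) \<union> (E2 - {e2}) \<union> {estar})"

definition is_hajos_join :: "'a set \<Rightarrow> 'a set set \<Rightarrow> bool" where
  "is_hajos_join V E \<longleftrightarrow> (\<exists>V1 E1 V2 E2. hajos_join_of V1 E1 V2 E2 V E)"

end

theory Submission
  imports Defs
begin

lemma col_exists:
  assumes "hypergraph V E" shows "\<exists>n. colorable V E n"
proof -
  from assms have fin: "finite V" and sub: "E \<subseteq> Pow V" and c2: "\<forall>e\<in>E. 2 \<le> card e"
    by (auto simp: hypergraph_def)
  obtain f :: "'a \<Rightarrow> nat" and n where f: "f ` V = {i. i < n}" "inj_on f V"
    using finite_imp_inj_to_nat_seg[OF fin] by blast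
  have "\<forall>e\<in>E. \<exists>x\<in>e. \<exists>y\<in>e. f x \<noteq> f y"
  proof
    fix e assume e: "e \<in> E"
    then have "2 \<le> card e" using c2 by auto
    then have fe: "finite e" using card.infinite by force
    have "\<not> card e \<le> Suc 0" using \<open>2 \<le> card e\<close> by simp
    then obtain x y where "x \<in> e" "y \<in> e" "x \<noteq> y"
      using card_le_Suc0_iff_eq[OF fe] by blast
    moreover have "e \<subseteq> V" using e sub by auto
    ultimately have "f x \<noteq> f y" using inj_on_eq_iff[OF f(2)] by blast
    then show "\<exists>x\<in>e. \<exists>y\<in>e. f x \<noteq> f y" using \<open>x \<in> e\<close> \<open>y \<in> e\<close> by blast
  qed
  moreover have "f ` V \<subseteq> {..<n}" using f(1) by auto
  ultimately show ?thesis unfolding colorable_def by blast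
qed

lemma col_mono: "colorable V E n \<Longrightarrow> n \<le> m \<Longrightarrow> colorable V E m"
  unfolding colorable_def by (meson lessThan_subset_iff order_trans)

lemma crit_not_col: "critical (k+1) V E \<Longrightarrow> \<not> colorable V E k"
proof
  assume "critical (k+1) V E" "colorable V E k"
  then have "chromatic_number V E \<le> k" unfolding chromatic_number_def using Least_le[of "colorable V E" k] by simp
  with \<open>critical (k+1) V E\<close> show False unfolding critical_def by simp
qed

lemma crit_sub_col:
  assumes "critical (k+1) V E" "proper_subhypergraph V' E' V E"
  shows "colorable V' E' k"
proof -
  have h: "hypergraph V' E'" using assms(2) by (simp add: proper_subhypergraph_def)
  have "chromatic_number V' E' < k+1" using assms unfolding critical_def by blast
  moreover have "colorable V' E' (chromatic_number V' E')"
    unfolding chromatic_number_def using col_exists[OF h] by (rule LeastI_ex)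
  ultimately show ?thesis using col_mono by fastforce
qed

lemma glue:
  assumes f1: "f1 ` V1 \<subseteq> {..<k}" "\<forall>e\<in>A. \<exists>x\<in>e. \<exists>y\<in>e. f1 x \<noteq> f1 y" "\<forall>e\<in>A. e \<subseteq> V1"
    and f2: "f2 ` V2 \<subseteq> {..<k}" "\<forall>e\<in>B. \<exists>x\<in>e. \<exists>y\<in>e. f2 x \<noteq> f2 y" "\<forall>e\<in>B. e \<subseteq> V2"
    and int: "V1 \<inter> V2 = {v}"
  shows "colorable (V1 \<union> V2) (A \<union> B) k"
proof -
  have v1: "v \<in> V1" and v2: "v \<in> V2" using int by auto
  define a where "a = f2 v"
  define b where "b = f1 v"
  have ak: "a < k" and bk: "b < k" using f1 f2 v1 v2 a_def b_def by auto
  define s where "s = (\<lambda>x::nat. if x = a then b else if x = b then a else x)"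
  have sinj: "inj s" unfolding s_def inj_on_def by auto
  define f where "f = (\<lambda>x. if x \<in> V1 then f1 x else s (f2 x))"
  have fV2: "\<forall>x\<in>V2. f x = s (f2 x)"
  proof
    fix x assume x: "x \<in> V2"
    show "f x = s (f2 x)"
    proof (cases "x \<in> V1")
      case True then have "x = v" using x int by auto
      then show ?thesis unfolding f_def s_def a_def b_def using v1 by auto
    qed (simp add: f_def)
  qed
  have "f ` (V1 \<union> V2) \<subseteq> {..<k}"
  proof
    fix y assume "y \<in> f ` (V1 \<union> V2)"
    then obtain x where x: "x \<in> V1 \<union> V2" "y = f x" by auto
    show "y \<in> {..<k}"
    proof (cases "x \<in> V1")
      case True then show ?thesis using x f1(1) f_def by auto
    next
      case False then have "x \<in> V2" using x by auto
      then have "f2 x < k" using f2(1) by auto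
      then show ?thesis using x False ak bk unfolding f_def s_def by auto
    qed
  qed
  moreover have "\<forall>e\<in>A \<union> B. \<exists>x\<in>e. \<exists>y\<in>e. f x \<noteq> f y"
  proof
    fix e assume "e \<in> A \<union> B"
    then show "\<exists>x\<in>e. \<exists>y\<in>e. f x \<noteq> f y"
    proof
      assume e: "e \<in> A"
      then obtain x y where "x \<in> e" "y \<in> e" "f1 x \<noteq> f1 y" using f1(2) by blast
      moreover have "e \<subseteq> V1" using e f1(3) by blast
      ultimately have "f x \<noteq> f y" unfolding f_def by auto
      then show ?thesis using \<open>x \<in> e\<close> \<open>y \<in> e\<close> by blast
    next
      assume e: "e \<in> B"
      then obtain x y where "x \<in> e" "y \<in> e" "f2 x \<noteq> f2 y" using f2(2) by blast
      moreover have "e \<subseteq> V2" using e f2(3) by blast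
      ultimately have "f x = s (f2 x)" "f y = s (f2 y)" using fV2 by auto
      then have "f x \<noteq> f y" using \<open>f2 x \<noteq> f2 y\<close> sinj by (simp add: inj_eq)
      then show ?thesis using \<open>x \<in> e\<close> \<open>y \<in> e\<close> by blast
    qed
  qed
  ultimately show ?thesis unfolding colorable_def by blast
qed

lemma side:
  assumes crit: "critical (k+1) V E"
    and W: "W1 \<subseteq> V" "W2 \<subseteq> V" "W1 \<union> W2 = V" "W1 \<inter> W2 = {v}" "2 \<le> card W1" "2 \<le> card W2"
    and sep: "E - {e} = induced_edges (E - {e}) W1 \<union> induced_edges (E - {e}) W2"
    and e: "e \<subseteq> W1"
  shows False
proof -
  have hyp: "hypergraph V E" using crit by (simp add: critical_def)
  then have fin: "finite V" and sub: "E \<subseteq> Pow V" and c2: "\<forall>e\<in>E. 2 \<le> card e"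
    by (auto simp: hypergraph_def)
  define A where "A = induced_edges E W1"
  define B where "B = induced_edges E W2"
  have EAB: "E = A \<union> B"
  proof
    show "E \<subseteq> A \<union> B"
    proof
      fix x assume x: "x \<in> E"
      show "x \<in> A \<union> B"
      proof (cases "x = e")
        case True then show ?thesis using x e by (auto simp: A_def induced_edges_def)
      next
        case False then have "x \<in> E - {e}" using x by auto
        then have "x \<in> induced_edges (E - {e}) W1 \<union> induced_edges (E - {e}) W2" using sep \<open>x \<in> E - {e}\<close> by blast
        then show ?thesis by (auto simp: A_def B_def induced_edges_def)
      qed
    qed
  qed (auto simp: A_def B_def induced_edges_def)
  obtain y2 where y2: "y2 \<in> W2" "y2 \<noteq> v"
  proof -
    have "\<not> W2 \<subseteq> {v}"
    proof
      assume "W2 \<subseteq> {v}" then have "card W2 \<le> 1"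
        using card_mono[of "{v}"] by fastforce
      then show False using W by simp
    qed
    then show ?thesis using that by blast
  qed
  obtain y1 where y1: "y1 \<in> W1" "y1 \<noteq> v"
  proof -
    have "\<not> W1 \<subseteq> {v}"
    proof
      assume "W1 \<subseteq> {v}" then have "card W1 \<le> 1"
        using card_mono[of "{v}"] by fastforce
      then show False using W by simp
    qed
    then show ?thesis using that by blast
  qed
  have y2n: "y2 \<notin> W1" using y2 W by blast
  have y1n: "y1 \<notin> W2" using y1 W by blast
  have pA: "proper_subhypergraph W1 A V E"
    unfolding proper_subhypergraph_def hypergraph_def
    using W fin c2 y2n y2 finite_subset[OF W(1) fin]
    by (auto simp: A_def induced_edges_def)
  have pB: "proper_subhypergraph W2 B V E"
    unfolding proper_subhypergraph_def hypergraph_def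
    using W fin c2 y1n y1 finite_subset[OF W(2) fin]
    by (auto simp: B_def induced_edges_def)
  obtain f1 where f1: "f1 ` W1 \<subseteq> {..<k}" "\<forall>e\<in>A. \<exists>x\<in>e. \<exists>y\<in>e. f1 x \<noteq> f1 y"
    using crit_sub_col[OF crit pA] unfolding colorable_def by blast
  obtain f2 where f2: "f2 ` W2 \<subseteq> {..<k}" "\<forall>e\<in>B. \<exists>x\<in>e. \<exists>y\<in>e. f2 x \<noteq> f2 y"
    using crit_sub_col[OF crit pB] unfolding colorable_def by blast
  have "colorable (W1 \<union> W2) (A \<union> B) k"
    by (rule glue[OF f1(1) f1(2) _ f2(1) f2(2) _ W(4)]) (auto simp: A_def B_def induced_edges_def)
  then have "colorable V E k" using W EAB by simp
  then show False using crit_not_col[OF crit] by simp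
qed

theorem theorem10:
  fixes V :: "'a set" and E :: "'a set set" and k :: nat
  assumes "k \<ge> 3"
    and "critical (k + 1) V E"
    and "v \<in> V" and "e \<in> E"
    and "separating_vertex V (E - {e}) v"
  shows "is_hajos_join V E"
proof -
  note crit = assms(2)
  have hyp: "hypergraph V E" using crit by (simp add: critical_def)
  then have fin: "finite V" and sub: "E \<subseteq> Pow V" and c2: "\<forall>e\<in>E. 2 \<le> card e"
    by (auto simp: hypergraph_def)
  obtain W1 W2 where W: "W1 \<subseteq> V" "W2 \<subseteq> V" "W1 \<union> W2 = V" "W1 \<inter> W2 = {v}" "2 \<le> card W1" "2 \<le> card W2"
    and sep: "E - {e} = induced_edges (E - {e}) W1 \<union> induced_edges (E - {e}) W2"
  proof -
    have "\<exists>W1 W2. W1 \<subseteq> V \<and> W2 \<subseteq> V \<and> W1 \<union> W2 = V \<and>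
      W1 \<inter> W2 = {v} \<and> 2 \<le> card W1 \<and> 2 \<le> card W2 \<and>
      E - {e} = induced_edges (E - {e}) W1 \<union> induced_edges (E - {e}) W2"
      using assms(5) unfolding separating_vertex_def .
    then obtain W1 W2 where H: "W1 \<subseteq> V \<and> W2 \<subseteq> V \<and> W1 \<union> W2 = V \<and>
      W1 \<inter> W2 = {v} \<and> 2 \<le> card W1 \<and> 2 \<le> card W2 \<and>
      E - {e} = induced_edges (E - {e}) W1 \<union> induced_edges (E - {e}) W2"
      by (elim exE)
    from H show ?thesis by (elim conjE) (rule that)
  qed
  have eV: "e \<subseteq> V" using sub assms(4) by blast
  obtain x1 where x1: "x1 \<in> e" "x1 \<in> W1" "x1 \<noteq> v"
  proof -
    have "\<not> e \<subseteq> W2"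
    proof
      assume "e \<subseteq> W2"
      moreover have "E - {e} = induced_edges (E - {e}) W2 \<union> induced_edges (E - {e}) W1" by (metis Un_commute sep)
      moreover have "W2 \<union> W1 = V" "W2 \<inter> W1 = {v}" using W by auto
      ultimately show False using side[OF crit W(2) W(1) _ _ W(6) W(5)] by blast
    qed
    then obtain x where x: "x \<in> e" "x \<notin> W2" by blast
    have "x \<in> W1" using x eV W(3) by blast
    moreover have "x \<noteq> v" using x W(4) by blast
    ultimately show ?thesis using that x(1) by blast
  qed
  obtain x2 where x2: "x2 \<in> e" "x2 \<in> W2" "x2 \<noteq> v"
  proof -
    have "\<not> e \<subseteq> W1"
    proof
      assume "e \<subseteq> W1"
      then show False using side[OF crit W sep] by blast
    qed
    then obtain x where x: "x \<in> e" "x \<notin> W1" by blast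
    have "x \<in> W2" using x eV W(3) by blast
    moreover have "x \<noteq> v" using x W(4) by blast
    ultimately show ?thesis using that x(1) by blast
  qed
  have x1n: "x1 \<notin> W2" using x1 W(4) by blast
  have x2n: "x2 \<notin> W1" using x2 W(4) by blast
  have pe: "proper_subhypergraph V (E - {e}) V E"
    unfolding proper_subhypergraph_def hypergraph_def using fin sub c2 assms(4) by auto
  obtain c where c: "c ` V \<subseteq> {..<k}" "\<forall>d\<in>E - {e}. \<exists>x\<in>d. \<exists>y\<in>d. c x \<noteq> c y"
    using crit_sub_col[OF crit pe] unfolding colorable_def by blast
  define a where "a = c x1"
  have mono: "\<forall>y\<in>e. c y = a"
  proof (rule ccontr)
    assume "\<not> (\<forall>y\<in>e. c y = a)"
    then have "\<exists>x\<in>e. \<exists>y\<in>e. c x \<noteq> c y" using x1 a_def by blast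
    then have "colorable V E k" using c assms(4) unfolding colorable_def by blast
    then show False using crit_not_col[OF crit] by simp
  qed
  have cva: "c v = a"
  proof (rule ccontr)
    assume ne: "c v \<noteq> a"
    have "\<exists>b::nat. b < 3 \<and> b \<noteq> a \<and> b \<noteq> c v"
    proof -
      let ?b = "if 0 \<noteq> a \<and> 0 \<noteq> c v then 0 else if 1 \<noteq> a \<and> 1 \<noteq> c v then 1 else (2::nat)"
      have "?b < 3 \<and> ?b \<noteq> a \<and> ?b \<noteq> c v" by auto
      then show ?thesis by blast
    qed
    then obtain b :: nat where b: "b < 3" "b \<noteq> a" "b \<noteq> c v" by blast
    have ak: "a < k" using c x1 eV a_def by auto
    have bk: "b < k" using b assms(1) by simp
    define s where "s = (\<lambda>x::nat. if x = a then b else if x = b then a else x)"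
    have sinj: "inj s" unfolding s_def inj_on_def by auto
    define c' where "c' = (\<lambda>x. if x \<in> W1 then c x else s (c x))"
    have c'V2: "\<forall>x\<in>W2. c' x = s (c x)"
    proof
      fix x assume x: "x \<in> W2"
      show "c' x = s (c x)"
      proof (cases "x \<in> W1")
        case True then have "x = v" using x W by auto
        then show ?thesis unfolding c'_def s_def using True ne b by auto
      qed (simp add: c'_def)
    qed
    have "c' ` V \<subseteq> {..<k}"
    proof
      fix y assume "y \<in> c' ` V"
      then obtain x where x: "x \<in> V" "y = c' x" by auto
      have "c x < k" using c x by auto
      then show "y \<in> {..<k}" using x ak bk unfolding c'_def s_def by auto
    qed
    moreover have "\<forall>d\<in>E. \<exists>x\<in>d. \<exists>y\<in>d. c' x \<noteq> c' y"
    proof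
      fix d assume d: "d \<in> E"
      show "\<exists>x\<in>d. \<exists>y\<in>d. c' x \<noteq> c' y"
      proof (cases "d = e")
        case True
        have "c' x1 = a" using x1 a_def c'_def by simp
        moreover have "c' x2 = b" using x2 x2n mono unfolding c'_def s_def by auto
        ultimately have "c' x1 \<noteq> c' x2" using b by simp
        then show ?thesis using True x1(1) x2(1) by blast
      next
        case False
        then have dd: "d \<in> E - {e}" using d by auto
        then obtain x y where xy: "x \<in> d" "y \<in> d" "c x \<noteq> c y" using c(2) by blast
        have "d \<in> induced_edges (E - {e}) W1 \<union> induced_edges (E - {e}) W2" using sep dd by blast
        then have "d \<subseteq> W1 \<or> d \<subseteq> W2" by (auto simp: induced_edges_def)
        then show ?thesis
        proof
          assume "d \<subseteq> W1"
          then have "c' x \<noteq> c' y" using xy unfolding c'_def by auto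
          then show ?thesis using xy by blast
        next
          assume "d \<subseteq> W2"
          then have "c' x = s (c x)" "c' y = s (c y)" using xy c'V2 by auto
          then have "c' x \<noteq> c' y" using xy sinj by (simp add: inj_eq)
          then show ?thesis using xy by blast
        qed
      qed
    qed
    ultimately have "colorable V E k" unfolding colorable_def by blast
    then show False using crit_not_col[OF crit] by simp
  qed
  define e1 where "e1 = insert v (e \<inter> W1)"
  define e2 where "e2 = insert v (e \<inter> W2)"
  define A where "A = induced_edges (E - {e}) W1"
  define B where "B = induced_edges (E - {e}) W2"
  have e1mono: "\<forall>y\<in>e1. c y = a" using mono cva e1_def by auto
  have e2mono: "\<forall>y\<in>e2. c y = a" using mono cva e2_def by auto
  have e1A: "e1 \<notin> A"
  proof
    assume "e1 \<in> A" then have "e1 \<in> E - {e}" by (simp add: A_def induced_edges_def)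
    then obtain x y where "x \<in> e1" "y \<in> e1" "c x \<noteq> c y" using c(2) by blast
    then show False using e1mono by simp
  qed
  have e2B: "e2 \<notin> B"
  proof
    assume "e2 \<in> B" then have "e2 \<in> E - {e}" by (simp add: B_def induced_edges_def)
    then obtain x y where "x \<in> e2" "y \<in> e2" "c x \<noteq> c y" using c(2) by blast
    then show False using e2mono by simp
  qed
  have vW1: "v \<in> W1" and vW2: "v \<in> W2" using W by auto
  have fe1: "finite e1" using e1_def finite_subset[OF W(1) fin] finite_subset[OF eV fin] by simp
  have fe2: "finite e2" using e2_def finite_subset[OF eV fin] by simp
  have ce1: "2 \<le> card e1"
  proof -
    have "{v, x1} \<subseteq> e1" using x1 e1_def by auto
    then have "card {v, x1} \<le> card e1" using fe1 card_mono by blast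
    then show ?thesis using x1 by simp
  qed
  have ce2: "2 \<le> card e2"
  proof -
    have "{v, x2} \<subseteq> e2" using x2 e2_def by auto
    then have "card {v, x2} \<le> card e2" using fe2 card_mono by blast
    then show ?thesis using x2 by simp
  qed
  have h1: "hypergraph W1 (A \<union> {e1})"
    unfolding hypergraph_def using finite_subset[OF W(1) fin] c2 ce1 vW1
    by (auto simp: A_def induced_edges_def e1_def)
  have h2: "hypergraph W2 (B \<union> {e2})"
    unfolding hypergraph_def using finite_subset[OF W(2) fin] c2 ce2 vW2
    by (auto simp: B_def induced_edges_def e2_def)
  define estar where "estar = (if v \<in> e then e1 \<union> e2 else (e1 \<union> e2) - {v})"
  have e12: "e1 \<union> e2 = insert v e" using eV W e1_def e2_def by auto
  have est: "estar = e" using e12 estar_def by auto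
  have EE: "E = ((A \<union> {e1}) - {e1}) \<union> ((B \<union> {e2}) - {e2}) \<union> {estar}"
  proof -
    have "(A \<union> {e1}) - {e1} = A" using e1A by auto
    moreover have "(B \<union> {e2}) - {e2} = B" using e2B by auto
    moreover have "E = (E - {e}) \<union> {e}" using assms(4) by auto
    moreover have "E - {e} = A \<union> B" unfolding A_def B_def by (rule sep)
    ultimately show ?thesis using est by simp
  qed
  have "hajos_join_of W1 (A \<union> {e1}) W2 (B \<union> {e2}) V E"
    unfolding hajos_join_of_def
  proof (intro conjI h1 h2 exI)
    show "W1 \<inter> W2 = {v}" by (rule W(4))
    show "e1 \<in> A \<union> {e1}" by simp
    show "e2 \<in> B \<union> {e2}" by simp
    show "v \<in> e1" by (simp add: e1_def)
    show "v \<in> e2" by (simp add: e2_def)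
    show "estar = e1 \<union> e2 - {v} \<or> estar = e1 \<union> e2" by (simp add: estar_def)
    show "V = W1 \<union> W2" using W by simp
    show "E = A \<union> {e1} - {e1} \<union> (B \<union> {e2} - {e2}) \<union> {estar}" using EE by simp
  qed
  then show ?thesis unfolding is_hajos_join_def by blast
qed

end
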